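(* Let $k$ be a positive integer and let $p$ be the smallest positive integer such that $k<\kappa_p$ (in dimension $d=2$). If $p$ is a multiple of $4$ and $k-\kappa_{p-1}$ is an odd multiple of $p/2$, then $\delta_z(2,k)\neq\lfloor\lambda(2,k)\rfloor$.
   Context: A point of $\mathbb{Z}^2$ is primitive if its coordinates are relatively prime; $\mathbb{P}^2_\circ$ denotes the set of primitive points of $\mathbb{Z}^2$ whose first non-zero coordinate is positive. For a finite $\mathcal{X}\subset\mathbb{R}^2$, $\kappa(\mathcal{X})=\max_{i\in\{1,2\}}\sum_{x\in\mathcal{X}}|x_i|$, and $\delta_z(2,k)=\max\{|\mathcal{X}|:\mathcal{X}\subset\mathbb{P}^2_\circ,\ \kappa(\mathcal{X})\le k\}$. $B(2,p)=\{x\in\mathbb{R}^2:\|x\|_1\le p\}$; $N_p=|B(2,p)\cap\mathbb{P}^2_\circ|$ and $\kappa_p=\kappa(B(2,p)\cap\mathbb{P}^2_\circ)$ (with $N_0=\kappa_0=0$). With $p$ as in the claim, $\lambda(2,k)=N_{p-1}+\frac{2(k-\kappa_{p-1})}{p}$. *)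

theory Defs
  imports Complex_Main
begin

definition prim_pos :: "(int \<times> int) set" where
  "prim_pos = {(a, b). gcd a b = 1 \<and> (a > 0 \<or> (a = 0 \<and> b > 0))}"

definition kappa :: "(int \<times> int) set \<Rightarrow> int" where
  "kappa X = max (\<Sum>x\<in>X. \<bar>fst x\<bar>) (\<Sum>x\<in>X. \<bar>snd x\<bar>)"

definition delta_z2 :: "nat \<Rightarrow> nat" where
  "delta_z2 k = Max {card X | X. X \<subseteq> prim_pos \<and> finite X \<and> kappa X \<le> int k}"

definition ball1 :: "nat \<Rightarrow> (int \<times> int) set" where
  "ball1 p = {x. \<bar>fst x\<bar> + \<bar>snd x\<bar> \<le> int p}"

definition N_p :: "nat \<Rightarrow> nat" where
  "N_p p = card (ball1 p \<inter> prim_pos)"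

definition kappa_p :: "nat \<Rightarrow> int" where
  "kappa_p p = kappa (ball1 p \<inter> prim_pos)"

definition p_of :: "nat \<Rightarrow> nat" where
  "p_of k = (LEAST p. 0 < p \<and> int k < kappa_p p)"

definition lambda2 :: "nat \<Rightarrow> real" where
  "lambda2 k = (let p = p_of k in
     real (N_p (p - 1)) + 2 * real_of_int (int k - kappa_p (p - 1)) / real p)"

end

theory Submission
  imports Defs
begin

lemma prim_norm_ge1: "x \<in> prim_pos \<Longrightarrow> \<bar>fst x\<bar> + \<bar>snd x\<bar> \<ge> 1"
  by (cases x) (auto simp: prim_pos_def)

lemma finite_ball1: "finite (ball1 n)"
proof -
  have "ball1 n \<subseteq> {-int n..int n} \<times> {-int n..int n}"
    by (auto simp: ball1_def)
  then show ?thesis by (rule finite_subset) auto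
qed

definition sig :: "int \<times> int \<Rightarrow> int \<times> int" where
  "sig x = (if snd x > 0 then (snd x, fst x) else if snd x < 0 then (- snd x, - fst x) else (0, \<bar>fst x\<bar>))"

lemma sig_inv: "x \<in> prim_pos \<Longrightarrow> sig (sig x) = x"
  by (cases x) (auto simp: sig_def prim_pos_def)

lemma sig_mem: "x \<in> ball1 n \<inter> prim_pos \<Longrightarrow> sig x \<in> ball1 n \<inter> prim_pos"
proof (cases x)
  case (Pair a b)
  assume h: "x \<in> ball1 n \<inter> prim_pos"
  then have g: "gcd a b = 1" "a > 0 \<or> (a = 0 \<and> b > 0)" "\<bar>a\<bar> + \<bar>b\<bar> \<le> int n"
    using Pair by (auto simp: prim_pos_def ball1_def)
  have "b = 0 \<Longrightarrow> a = 1" using g by auto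
  then show ?thesis using g Pair
    by (auto simp: sig_def prim_pos_def ball1_def gcd.commute)
qed

lemma sig_abs: "x \<in> prim_pos \<Longrightarrow> \<bar>fst (sig x)\<bar> = \<bar>snd x\<bar>"
  by (cases x) (auto simp: sig_def prim_pos_def)

lemma sym_sum: "(\<Sum>x\<in>ball1 n \<inter> prim_pos. \<bar>snd x\<bar>) = (\<Sum>x\<in>ball1 n \<inter> prim_pos. \<bar>fst x\<bar>)"
  by (rule sum.reindex_bij_witness[where i=sig and j=sig])
     (use sig_mem in \<open>auto simp: sig_inv sig_abs\<close>)

lemma odd_fst:
  assumes "even (\<bar>a\<bar> + \<bar>b\<bar>)" "gcd a (b::int) = 1" shows "odd a"
proof
  assume "even a"
  then have "even b" using assms(1) by auto
  with \<open>even a\<close> have "2 dvd gcd a b" by simp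
  with assms(2) show False by simp
qed

lemma counting:
  fixes X :: "(int \<times> int) set" and P :: nat and m Q kk :: int
  defines "B \<equiv> ball1 (P - 1) \<inter> prim_pos"
  assumes fX: "finite X" and XP: "X \<subseteq> prim_pos"
    and S1: "(\<Sum>x\<in>X. \<bar>fst x\<bar>) \<le> kk" and S2: "(\<Sum>x\<in>X. \<bar>snd x\<bar>) \<le> kk"
    and P1: "P \<ge> 1" and PQ: "int P = 2 * Q" and Qe: "even Q" and mo: "odd m"
    and kk: "kk = (\<Sum>x\<in>B. \<bar>fst x\<bar>) + m * Q"
    and cX: "int (card X) = int (card B) + m"
  shows False
proof -
  define nrm where "nrm x = \<bar>fst x\<bar> + \<bar>snd x\<bar>" for x :: "int \<times> int"
  define kp where "kp = (\<Sum>x\<in>B. \<bar>fst x\<bar>)"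
  have fB: "finite B" unfolding B_def using finite_ball1 by auto
  define A where "A = X \<inter> B"
  define C where "C = X - B"
  define D where "D = B - X"
  have fA: "finite A" "finite C" "finite D" using fX fB by (auto simp: A_def C_def D_def)
  have sB2: "(\<Sum>x\<in>B. \<bar>snd x\<bar>) = kp" unfolding kp_def B_def by (rule sym_sum)
  have nB: "sum nrm B = 2 * kp" using sB2 by (simp add: nrm_def sum.distrib kp_def)
  have nX: "sum nrm X \<le> 2 * kk" using S1 S2 by (simp add: nrm_def sum.distrib)
  have X_split: "X = A \<union> C" "A \<inter> C = {}" by (auto simp: A_def C_def)
  have B_split: "B = A \<union> D" "A \<inter> D = {}" by (auto simp: A_def D_def)
  have eX: "sum nrm X = sum nrm A + sum nrm C" using X_split fA by (simp add: sum.union_disjoint)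
  have eB: "sum nrm B = sum nrm A + sum nrm D" using B_split fA by (simp add: sum.union_disjoint)
  have cXs: "card X = card A + card C" using X_split fA by (simp add: card_Un_disjoint)
  have cBs: "card B = card A + card D" using B_split fA by (simp add: card_Un_disjoint)
  have Dle: "sum nrm D \<le> (\<Sum>x\<in>D. int P - 1)"
    by (rule sum_mono) (use P1 in \<open>auto simp: D_def B_def ball1_def nrm_def of_nat_diff\<close>)
  have Cge: "\<And>x. x \<in> C \<Longrightarrow> int P \<le> nrm x"
    using P1 by (auto simp: C_def B_def ball1_def nrm_def subsetD[OF XP] of_nat_diff)
  have Cge': "(\<Sum>x\<in>C. int P) \<le> sum nrm C" by (rule sum_mono) (use Cge in auto)
  have cC: "int (card C) = m + int (card D)" using cX cXs cBs by simp
  have "2 * kk = 2 * kp + m * int P" using kk PQ by (simp add: kp_def algebra_simps)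
  from Dle Cge' nX eX eB nB cC this have d0: "card D = 0" and eqC: "sum nrm C = (\<Sum>x\<in>C. int P)"
     and eqX: "sum nrm X = 2 * kk"
    by (simp_all add: algebra_simps)
  have "sum (\<lambda>x. nrm x - int P) C = 0" using eqC by (simp add: sum_subtractf)
  then have nC: "\<And>x. x \<in> C \<Longrightarrow> nrm x = int P"
    using sum_nonneg_eq_0_iff[OF fA(2), of "\<lambda>x. nrm x - int P"] Cge by fastforce
  have DE: "D = {}" using d0 fA by simp
  then have AB: "A = B" using B_split by auto
  have S1X: "(\<Sum>x\<in>X. \<bar>fst x\<bar>) = kk" using eqX S1 S2 by (simp add: nrm_def sum.distrib)
  have "(\<Sum>x\<in>X. \<bar>fst x\<bar>) = (\<Sum>x\<in>A. \<bar>fst x\<bar>) + (\<Sum>x\<in>C. \<bar>fst x\<bar>)"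
    using X_split fA by (simp add: sum.union_disjoint)
  then have S1C: "(\<Sum>x\<in>C. \<bar>fst x\<bar>) = m * Q" using S1X AB kk by (simp add: kp_def)
  have oddC: "\<And>x. x \<in> C \<Longrightarrow> odd (fst x)"
  proof -
    fix x assume xC: "x \<in> C"
    then have "x \<in> prim_pos" using XP by (auto simp: C_def)
    then have "gcd (fst x) (snd x) = 1" by (cases x) (auto simp: prim_pos_def)
    moreover have "even (\<bar>fst x\<bar> + \<bar>snd x\<bar>)" using nC[OF xC] PQ by (simp add: nrm_def)
    ultimately show "odd (fst x)" by (metis odd_fst)
  qed
  have "2 dvd (\<Sum>x\<in>C. \<bar>fst x\<bar> - 1)" by (rule dvd_sum) (use oddC in auto)
  moreover have "(\<Sum>x\<in>C. \<bar>fst x\<bar> - 1) = m * Q - int (card C)" using S1C by (simp add: sum_subtractf)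
  moreover have "int (card C) = m" using cC d0 by simp
  ultimately have "even (m * Q - m)" by simp
  then show False using Qe mo by simp
qed

lemma card_bound:
  assumes "finite X" "X \<subseteq> prim_pos" "kappa X \<le> int k"
  shows "card X \<le> 2 * k"
proof -
  have "int (card X) = (\<Sum>x\<in>X. 1)" by simp
  also have "\<dots> \<le> (\<Sum>x\<in>X. \<bar>fst x\<bar> + \<bar>snd x\<bar>)"
    by (rule sum_mono) (use assms prim_norm_ge1 in auto)
  also have "\<dots> \<le> 2 * int k" using assms(3) by (simp add: sum.distrib kappa_def)
  finally show ?thesis by simp
qed

theorem lemma3p3:
  fixes k :: nat
  assumes "0 < k"
    and "4 dvd p_of k"
    and "\<exists>m::int. odd m \<and> int k - kappa_p (p_of k - 1) = m * (int (p_of k) div 2)"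
  shows "int (delta_z2 k) \<noteq> \<lfloor>lambda2 k\<rfloor>"
proof
  assume eq: "int (delta_z2 k) = \<lfloor>lambda2 k\<rfloor>"
  define P where "P = p_of k"
  obtain m :: int where mo: "odd m" and hm: "int k - kappa_p (P - 1) = m * (int P div 2)"
    using assms(3) P_def by blast
  define B where "B = ball1 (P - 1) \<inter> prim_pos"
  have kpB: "kappa_p (P - 1) = (\<Sum>x\<in>B. \<bar>fst x\<bar>)"
    unfolding kappa_p_def kappa_def B_def by (simp add: sym_sum)
  have P0: "P \<noteq> 0"
  proof
    assume "P = 0"
    then have "B = {}" unfolding B_def ball1_def using prim_norm_ge1 by fastforce
    then show False using hm kpB \<open>P = 0\<close> assms(1) by simp
  qed
  obtain t where t: "P = 4 * t" using assms(2) P_def by (auto elim: dvdE)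
  define Q where "Q = int P div 2"
  have PQ: "int P = 2 * Q" and Qe: "even Q" using t by (simp_all add: Q_def)
  define S where "S = {card X | X. X \<subseteq> prim_pos \<and> finite X \<and> kappa X \<le> int k}"
  have "S \<subseteq> {..2*k}" unfolding S_def using card_bound by auto
  then have fS: "finite S" by (rule finite_subset) auto
  have "card {} \<in> S" unfolding S_def kappa_def by force
  then have "delta_z2 k \<in> S" using fS unfolding delta_z2_def S_def[symmetric] by (intro Max_in) auto
  then obtain X where X: "X \<subseteq> prim_pos" "finite X" "kappa X \<le> int k" "card X = delta_z2 k"
    unfolding S_def by auto
  have lam: "lambda2 k = real (card B) + real_of_int m"
    using P0 PQ hm unfolding lambda2_def Let_def P_def[symmetric] Q_def[symmetric] B_def N_p_def
    by (simp add: field_simps)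
  have cX: "int (card X) = int (card B) + m" using eq X(4) lam by simp
  show False
    apply (rule counting[of X "int k" P Q m])
    using X cX P0 PQ Qe mo hm kpB by (auto simp: kappa_def B_def Q_def)
qed

end
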